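(* If $f:S\to T$ is a nested tuple morphism, then $\mathrm{coal}(L_f)=L_{\mathrm{coal}(f)}$.
   Context: Nested tuples (of positive integers): a positive integer or a finite tuple of nested tuples; flattening $X^\flat$ = integer leaves left to right, $\mathrm{len}$, $\mathrm{entry}_i$. $\langle n\rangle_*=\{*,1,\dots,n\}$. A layout is $L=S:D$ with congruent nested tuples $S$ (positive) and $D$ (nonnegative); $L^\flat=S^\flat:D^\flat$. For a flat layout $L=(s_1,\dots,s_m):(d_1,\dots,d_m)$, $\mathrm{squeeze}(L)$ removes all modes $s_i:d_i$ with $s_i=1$, and $\mathrm{coal}^\flat(L)$ is obtained from $\mathrm{squeeze}(L)$ by repeatedly replacing adjacent modes $s_i,s_{i+1}:d_i,d_{i+1}$ with $d_{i+1}=s_id_i$ by the single mode $s_is_{i+1}:d_i$ until no such pair remains. For a layout $L$, writing $\mathrm{coal}^\flat(L^\flat)=(s_1,\dots,s_m):(d_1,\dots,d_m)$: $\mathrm{coal}(L)$ is this flat layout if $m>1$, the depth-$0$ layout $s_1:d_1$ if $m=1$, and $1:0$ if $m=0$. A tuple morphism $f:(s_1,\dots,s_m)\to(t_1,\dots,t_n)$ is given by a pointed map $\alpha:\langle m\rangle_*\to\langle n\rangle_*$ with each $j\ne*$ having at most one preimage and $s_i=t_{\alpha(i)}$ whenever $\alpha(i)\ne*$; a nested tuple morphism $f:S\to T$ is a tuple morphism $f^\flat:S^\flat\to T^\flat$. The encoded layout $L_f$ has shape $S$ and stride congruent to $S$ with $i$-th flattened entry $0$ if $\alpha(i)=*$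 and $\prod_{j<\alpha(i)}t_j$ otherwise (where $T^\flat=(t_1,\dots,t_n)$). Coalesce of a tuple morphism $f$ over $\alpha$: $\mathrm{squeeze}(f)$ is obtained by deleting domain indices $i$ with $s_i=1$ and codomain indices $j$ with $t_j=1$ (renumbering increasingly); write it $(s_1,\dots,s_m)\to(t_1,\dots,t_n)$ over $\beta$. On $\{1,\dots,m\}$, for $i\le i'$ set $i\sim i'$ if either $\beta(i'')=*$ for all $i\le i''\le i'$, or $\beta(i'')=\beta(i)+(i''-i)$ for all $i\le i''\le i'$. On $\{1,\dots,n\}$, for $j\le j'$ set $j\sim j'$ if there is $i$ with $\beta(i+t)=j+t$ for all $0\le t\le j'-j$. The classes are intervals, ordered increasingly, identified with $\{1,\dots,\bar m\}$ and $\{1,\dots,\bar n\}$; $\bar s_{[i]}=\prod_{i'\in[i]}s_{i'}$, $\bar t_{[j]}=\prod_{j'\in[j]}t_{j'}$, $\bar\beta([i])=[\beta(i)]$ (or $*$). Then $\mathrm{coal}^\flat(f):(\bar s_1,\dots,\bar s_{\bar m})\to(\bar t_1,\dots,\bar t_{\bar n})$ lies over $\bar\beta$. For a nested tuple morphism $f$: if $\bar m>1$, $\mathrm{coal}(f)=\mathrm{coal}^\flat(f^\flat)$; if $\bar m=1$, $\mathrm{coal}(f)$ is the morphism from the integer $\bar s_1$ to $(\bar t_1,\dots,\bar t_{\bar n})$ with the same underlying map; if $\bar m=0$, $\mathrm{coal}(f)$ is the morphism from the integer $1$ to $(\bar t_1,\dots,\bar t_{\bar n})$ sending its entry to $*$.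 *)

theory Defs
  imports Main
begin

datatype 'a ntup = Lf 'a | Nd "'a ntup list"

fun flat :: "'a ntup \<Rightarrow> 'a list" where
  "flat (Lf x) = [x]"
| "flat (Nd xs) = concat (map flat xs)"

fun congruent :: "'a ntup \<Rightarrow> 'b ntup \<Rightarrow> bool" where
  "congruent (Lf _) (Lf _) = True"
| "congruent (Nd xs) (Nd ys) = list_all2 congruent xs ys"
| "congruent _ _ = False"

definition positive_nt :: "nat ntup \<Rightarrow> bool" where
  "positive_nt S \<longleftrightarrow> (\<forall>x \<in> set (flat S). 0 < x)"

type_synonym layout = "nat ntup \<times> nat ntup"

definition is_layout :: "layout \<Rightarrow> bool" where
  "is_layout L \<longleftrightarrow> positive_nt (fst L) \<and> congruent (fst L) (snd L)"

text \<open>Flat layouts are lists of modes (s_i, d_i).\<close>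
definition squeeze_l :: "(nat \<times> nat) list \<Rightarrow> (nat \<times> nat) list" where
  "squeeze_l xs = filter (\<lambda>(s, d). s \<noteq> 1) xs"

text \<open>Repeated merging of adjacent modes (s_i,d_i),(s_{i+1},d_{i+1}) with d_{i+1} = s_i d_i
  into (s_i s_{i+1}, d_i), until no such pair remains (carried out right to left).\<close>
fun merge_modes :: "(nat \<times> nat) list \<Rightarrow> (nat \<times> nat) list" where
  "merge_modes [] = []"
| "merge_modes (x # xs) =
     (case merge_modes xs of
        [] \<Rightarrow> [x]
      | y # ys \<Rightarrow> (if snd y = fst x * snd x then (fst x * fst y, snd x) # ys
                   else x # y # ys))"

definition coal_flat_l :: "(nat \<times> nat) list \<Rightarrow> (nat \<times> nat) list" where
  "coal_flat_l xs = merge_modes (squeeze_l xs)"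

definition coal_layout :: "layout \<Rightarrow> layout" where
  "coal_layout L =
    (let zs = coal_flat_l (zip (flat (fst L)) (flat (snd L))) in
     if length zs > 1 then (Nd (map (Lf \<circ> fst) zs), Nd (map (Lf \<circ> snd) zs))
     else if length zs = 1 then (Lf (fst (hd zs)), Lf (snd (hd zs)))
     else (Lf 1, Lf 0))"

text \<open>Indices are 0-based: the pointed map alpha on domain entries is a list of
  length m with entries None (= *) or Some j, j < n (0-based codomain index).\<close>
definition is_tuple_mor :: "nat list \<Rightarrow> nat list \<Rightarrow> nat option list \<Rightarrow> bool" where
  "is_tuple_mor ss ts al \<longleftrightarrow>
     length al = length ss \<and>
     (\<forall>i < length ss. \<forall>j. al ! i = Some j \<longrightarrow> j < length ts \<and> ss ! i = ts ! j) \<and>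
     (\<forall>i < length ss. \<forall>i' < length ss. \<forall>j. al ! i = Some j \<and> al ! i' = Some j \<longrightarrow> i = i')"

datatype ntmor = NTM (mdom: "nat ntup") (mcod: "nat ntup") (amap: "nat option list")

definition is_ntmor :: "ntmor \<Rightarrow> bool" where
  "is_ntmor f \<longleftrightarrow> positive_nt (mdom f) \<and> positive_nt (mcod f) \<and>
     is_tuple_mor (flat (mdom f)) (flat (mcod f)) (amap f)"

definition enc_strides :: "nat list \<Rightarrow> nat option list \<Rightarrow> nat list" where
  "enc_strides ts al = map (\<lambda>a. case a of None \<Rightarrow> 0 | Some j \<Rightarrow> prod_list (take j ts)) al"

definition enc_layout :: "ntmor \<Rightarrow> layout" where
  "enc_layout f = (mdom f,
     THE D. congruent (mdom f) D \<and> flat D = enc_strides (flat (mcod f)) (amap f))"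

definition kept :: "nat list \<Rightarrow> nat list" where
  "kept xs = filter (\<lambda>i. xs ! i \<noteq> 1) [0..<length xs]"

definition renum :: "nat list \<Rightarrow> nat \<Rightarrow> nat" where
  "renum ts j = length (filter (\<lambda>j'. ts ! j' \<noteq> 1) [0..<j])"

definition sq_dom :: "nat list \<Rightarrow> nat list" where
  "sq_dom ss = map (\<lambda>i. ss ! i) (kept ss)"

definition sq_map :: "nat list \<Rightarrow> nat list \<Rightarrow> nat option list \<Rightarrow> nat option list" where
  "sq_map ss ts al = map (\<lambda>i. map_option (renum ts) (al ! i)) (kept ss)"

definition drel :: "nat option list \<Rightarrow> nat \<Rightarrow> nat \<Rightarrow> bool" where
  "drel be i i' \<longleftrightarrow> i \<le> i' \<and>
     ((\<forall>k. i \<le> k \<and> k \<le> i' \<longrightarrow> be ! k = None) \<or>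
      (\<forall>k. i \<le> k \<and> k \<le> i' \<longrightarrow> be ! i \<noteq> None \<and> be ! k = Some (the (be ! i) + (k - i))))"

definition dsim :: "nat option list \<Rightarrow> nat \<Rightarrow> nat \<Rightarrow> bool" where
  "dsim be i i' \<longleftrightarrow> drel be i i' \<or> drel be i' i"

definition crel :: "nat option list \<Rightarrow> nat \<Rightarrow> nat \<Rightarrow> bool" where
  "crel be j j' \<longleftrightarrow> j \<le> j' \<and>
     (j = j' \<or> (\<exists>i. i + (j' - j) < length be \<and> (\<forall>t \<le> j' - j. be ! (i + t) = Some (j + t))))"

definition csim :: "nat option list \<Rightarrow> nat \<Rightarrow> nat \<Rightarrow> bool" where
  "csim be j j' \<longleftrightarrow> crel be j j' \<or> crel be j' j"

definition classes :: "(nat \<Rightarrow> nat \<Rightarrow> bool) \<Rightarrow> nat \<Rightarrow> nat set list" where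
  "classes R m =
     map (\<lambda>r. {i. i < m \<and> R r i})
       (sorted_list_of_set {r. r < m \<and> (\<forall>r' < r. \<not> R r' r)})"

definition coal_data :: "nat list \<Rightarrow> nat list \<Rightarrow> nat option list
                          \<Rightarrow> nat list \<times> nat list \<times> nat option list" where
  "coal_data ss0 ts0 al0 =
    (let ss = sq_dom ss0; ts = sq_dom ts0; be = sq_map ss0 ts0 al0;
         DC = classes (dsim be) (length ss); CC = classes (csim be) (length ts);
         sb = map (\<lambda>C. \<Prod>i\<in>C. ss ! i) DC;
         tb = map (\<lambda>C. \<Prod>j\<in>C. ts ! j) CC;
         bb = map (\<lambda>C. case be ! (Min C) of None \<Rightarrow> None
                        | Some j \<Rightarrow> Some (THE k. k < length CC \<and> j \<in> CC ! k)) DC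
     in (sb, tb, bb))"

definition coal_mor :: "ntmor \<Rightarrow> ntmor" where
  "coal_mor f =
    (case coal_data (flat (mdom f)) (flat (mcod f)) (amap f) of (sb, tb, bb) \<Rightarrow>
       if length sb > 1 then NTM (Nd (map Lf sb)) (Nd (map Lf tb)) bb
       else if length sb = 1 then NTM (Lf (hd sb)) (Nd (map Lf tb)) bb
       else NTM (Lf 1) (Nd (map Lf tb)) [None])"

end

theory Submission
  imports Defs
begin

fun bl :: "(nat \<Rightarrow> bool) \<Rightarrow> nat \<Rightarrow> nat \<Rightarrow> (nat \<times> nat) list" where
  "bl g i 0 = []"
| "bl g i (Suc n) = (case bl g (Suc i) n of [] \<Rightarrow> [(i, Suc i)]
     | (a, b) # r \<Rightarrow> (if g i then (i, b) # r else (i, Suc i) # (a, b) # r))"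

fun chain :: "nat \<Rightarrow> nat \<Rightarrow> (nat \<times> nat) list \<Rightarrow> bool" where
  "chain i e [] = (i = e)"
| "chain i e (x # r) = (fst x = i \<and> fst x < snd x \<and> chain (snd x) e r)"

lemma bl_Suc_ne: "bl g i (Suc n) \<noteq> []"
  by (simp split: list.split prod.split)

lemma bl_Nil_iff: "bl g i n = [] \<longleftrightarrow> n = 0"
  using bl_Suc_ne by (cases n) auto

lemma chain_bl: "chain i (i + n) (bl g i n)"
proof (induction n arbitrary: i)
  case 0 then show ?case by simp
next
  case (Suc n)
  have IH: "chain (Suc i) (Suc i + n) (bl g (Suc i) n)" using Suc.IH[of "Suc i"] by simp
  show ?case
  proof (cases "bl g (Suc i) n")
    case Nil
    then have "n = 0" by (simp add: bl_Nil_iff)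
    then show ?thesis using Nil by simp
  next
    case (Cons x r)
    then show ?thesis using IH by (cases x) auto
  qed
qed

lemma chain_le: "chain i e xs \<Longrightarrow> i \<le> e"
proof (induction xs arbitrary: i)
  case Nil then show ?case by simp
next
  case (Cons y r)
  then have "snd y \<le> e" "i < snd y" by auto
  then show ?case by simp
qed

lemma chain_ge: "chain i e xs \<Longrightarrow> x \<in> set xs \<Longrightarrow> i \<le> fst x \<and> fst x < snd x \<and> snd x \<le> e"
proof (induction xs arbitrary: i)
  case Nil then show ?case by simp
next
  case (Cons y r)
  then have h: "fst y = i" "fst y < snd y" "chain (snd y) e r" by auto
  show ?case
  proof (cases "x = y")
    case True then show ?thesis using h chain_le[OF h(3)] by simp
  next
    case False
    then have "x \<in> set r" using Cons.prems by simp
    then show ?thesis using Cons.IH[OF h(3)] h by auto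
  qed
qed

lemma chain_sorted: "chain i e xs \<Longrightarrow> sorted_wrt (<) (map fst xs)"
proof (induction xs arbitrary: i)
  case Nil then show ?case by simp
next
  case (Cons y r)
  then show ?case using chain_ge[of "snd y" e r] by fastforce
qed

lemma chain_cover: "chain i e xs \<Longrightarrow> i \<le> j \<Longrightarrow> j < e \<Longrightarrow> \<exists>x\<in>set xs. fst x \<le> j \<and> j < snd x"
proof (induction xs arbitrary: i)
  case Nil then show ?case by simp
next
  case (Cons y r)
  show ?case
  proof (cases "j < snd y")
    case True then show ?thesis using Cons.prems by auto
  next
    case False then show ?thesis using Cons by auto
  qed
qed

lemma chain_disj: "chain i e xs \<Longrightarrow> K < K' \<Longrightarrow> K' < length xs \<Longrightarrow> snd (xs ! K) \<le> fst (xs ! K')"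
proof (induction xs arbitrary: i K K')
  case Nil then show ?case by simp
next
  case (Cons y r)
  show ?case
  proof (cases K)
    case 0
    then obtain K'' where K': "K' = Suc K''" using Cons.prems by (cases K') auto
    have "r ! K'' \<in> set r" using Cons.prems K' by auto
    then show ?thesis using chain_ge[of "snd y" e r "r ! K''"] Cons.prems 0 K' by auto
  next
    case (Suc k)
    then obtain K'' where K': "K' = Suc K''" using Cons.prems by (cases K') auto
    then show ?thesis using Cons Suc by auto
  qed
qed




lemma bl_step: "bl g (Suc i) n = (a,b)#r \<Longrightarrow> bl g i (Suc n) = (if g i then (i,b)#r else (i,Suc i)#(a,b)#r)"
  by simp

lemma bl_one: "bl g i (Suc 0) = [(i, Suc i)]"
  by simp

lemma bl_Suc_cases:
  obtains (one) "n = 0" "bl g i (Suc n) = [(i, Suc i)]"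
  | (more) a b r where "bl g (Suc i) n = (a,b)#r" "a = Suc i" "a < b" "chain b (Suc i + n) r"
       "bl g i (Suc n) = (if g i then (i,b)#r else (i,Suc i)#(a,b)#r)"
proof (cases "bl g (Suc i) n")
  case Nil
  then have "n = 0" by (simp add: bl_Nil_iff)
  then show ?thesis using one by simp
next
  case (Cons y r)
  obtain a b where y: "y = (a,b)" by (cases y)
  have ab: "bl g (Suc i) n = (a,b)#r" using Cons y by simp
  have c: "chain (Suc i) (Suc i + n) (bl g (Suc i) n)" by (rule chain_bl)
  then have "a = Suc i" "a < b" "chain b (Suc i + n) r" using ab by auto
  then show ?thesis using more[OF ab] bl_step[OF ab] by blast
qed

lemma bl_inside: "x \<in> set (bl g i n) \<Longrightarrow> fst x \<le> k \<Longrightarrow> Suc k < snd x \<Longrightarrow> g k"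
proof (induction n arbitrary: i x)
  case 0 then show ?case by simp
next
  case (Suc n)
  show ?case
  proof (cases rule: bl_Suc_cases[of n g i])
    case one
    then show ?thesis using Suc.prems by auto
  next
    case (more a b r)
    have IH: "\<And>y. y \<in> set (bl g (Suc i) n) \<Longrightarrow> fst y \<le> k \<Longrightarrow> Suc k < snd y \<Longrightarrow> g k"
      using Suc.IH by blast
    show ?thesis
    proof (cases "g i")
      case True
      then have xs: "x = (i, b) \<or> x \<in> set r" using Suc.prems(1) more(5) by simp
      show ?thesis
      proof (cases "x = (i, b)")
        case True
        show ?thesis
        proof (cases "k = i")
          case False
          then have "fst (a,b) \<le> k" "Suc k < snd (a,b)" using True Suc.prems more by auto
          then show ?thesis using IH[of "(a,b)"] more(1) by simp
        qed (use \<open>g i\<close> in simp)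
      next
        case False
        then show ?thesis using xs IH[of x] Suc.prems more(1) by simp
      qed
    next
      case False
      then have "x = (i, Suc i) \<or> x \<in> set (bl g (Suc i) n)" using Suc.prems(1) more by auto
      then show ?thesis using IH[of x] Suc.prems by auto
    qed
  qed
qed

lemma bl_start: "x \<in> set (bl g i n) \<Longrightarrow> fst x = i \<or> \<not> g (fst x - 1)"
proof (induction n arbitrary: i x)
  case 0 then show ?case by simp
next
  case (Suc n)
  show ?case
  proof (cases rule: bl_Suc_cases[of n g i])
    case one
    then show ?thesis using Suc.prems by auto
  next
    case (more a b r)
    have IH: "\<And>y. y \<in> set (bl g (Suc i) n) \<Longrightarrow> fst y = Suc i \<or> \<not> g (fst y - 1)"
      using Suc.IH by blast
    show ?thesis
    proof (cases "g i")
      case True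
      then have xs: "x = (i, b) \<or> x \<in> set r" using Suc.prems(1) more(5) by simp
      moreover have "x \<in> set r \<Longrightarrow> fst x \<noteq> Suc i" using chain_ge[OF more(4)] more by fastforce
      ultimately show ?thesis using IH[of x] more(1) by auto
    next
      case False
      then have "x = (i, Suc i) \<or> x \<in> set (bl g (Suc i) n)" using Suc.prems(1) more by auto
      then show ?thesis using IH[of x] False by auto
    qed
  qed
qed

lemma bl_end: "x \<in> set (bl g i n) \<Longrightarrow> snd x = i + n \<or> \<not> g (snd x - 1)"
proof (induction n arbitrary: i x)
  case 0 then show ?case by simp
next
  case (Suc n)
  show ?case
  proof (cases rule: bl_Suc_cases[of n g i])
    case one
    then show ?thesis using Suc.prems by auto
  next
    case (more a b r)
    have IH: "\<And>y. y \<in> set (bl g (Suc i) n) \<Longrightarrow> snd y = Suc i + n \<or> \<not> g (snd y - 1)"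
      using Suc.IH by blast
    show ?thesis
    proof (cases "g i")
      case True
      then have xs: "x = (i, b) \<or> x \<in> set r" using Suc.prems(1) more(5) by simp
      then show ?thesis using IH[of x] IH[of "(a,b)"] more(1) by auto
    next
      case False
      then have "x = (i, Suc i) \<or> x \<in> set (bl g (Suc i) n)" using Suc.prems(1) more by auto
      then show ?thesis using IH[of x] False by auto
    qed
  qed
qed

lemma bl_cong: "(\<And>k. i \<le> k \<Longrightarrow> Suc k < i + n \<Longrightarrow> g k = g' k) \<Longrightarrow> bl g i n = bl g' i n"
proof (induction n arbitrary: i)
  case 0 then show ?case by simp
next
  case (Suc n)
  have e: "bl g (Suc i) n = bl g' (Suc i) n"
    by (rule Suc.IH) (rule Suc.prems, simp, simp)
  show ?case
  proof (cases rule: bl_Suc_cases[of n g' i])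
    case one
    then show ?thesis by (simp only: bl_one)
  next
    case (more a b r)
    have "b \<le> Suc i + n" using chain_le[OF more(4)] .
    then have "0 < n" using more by simp
    then have gi: "g i = g' i" by (intro Suc.prems) auto
    have ab: "bl g (Suc i) n = (a,b)#r" using e more(1) by simp
    show ?thesis using bl_step[OF ab] more(5) gi by simp
  qed
qed

lemma classes_bl:
  assumes R: "\<And>i i'. i < m \<Longrightarrow> i' < m \<Longrightarrow> R i i' \<longleftrightarrow> (\<forall>k. min i i' \<le> k \<and> k < max i i' \<longrightarrow> g k)"
  shows "classes R m = map (\<lambda>x. {fst x..<snd x}) (bl g 0 m)"
proof -
  define BL where "BL = bl g 0 m"
  have ch: "chain 0 m BL" unfolding BL_def using chain_bl[of 0 m g] by simp
  have st: "{r. r < m \<and> (\<forall>r'<r. \<not> R r' r)} = set (map fst BL)"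
  proof (intro equalityI subsetI)
    fix r assume "r \<in> {r. r < m \<and> (\<forall>r'<r. \<not> R r' r)}"
    then have r: "r < m" "\<And>r'. r' < r \<Longrightarrow> \<not> R r' r" by auto
    obtain x where x: "x \<in> set BL" "fst x \<le> r" "r < snd x" using chain_cover[OF ch, of r] r by auto
    have "r = fst x"
    proof (rule ccontr)
      assume "r \<noteq> fst x"
      then have "fst x \<le> r - 1" "Suc (r - 1) < snd x \<or> Suc (r - 1) = r" using x by auto
      then have "g (r - 1)" using bl_inside[of x g 0 m "r - 1"] x \<open>r \<noteq> fst x\<close> unfolding BL_def by auto
      moreover have "r - 1 < r" using x \<open>r \<noteq> fst x\<close> by auto
      moreover have "k = r - 1" if "r - 1 \<le> k" "k < r" for k using that by arith
      ultimately have "R (r - 1) r" using R[of "r - 1" r] r by auto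
      then show False using r(2)[of "r - 1"] \<open>r - 1 < r\<close> by simp
    qed
    then show "r \<in> set (map fst BL)" using x by auto
  next
    fix r assume "r \<in> set (map fst BL)"
    then obtain x where x: "x \<in> set BL" "r = fst x" by auto
    have "r < m" using chain_ge[OF ch x(1)] x by auto
    moreover have "\<not> R r' r" if "r' < r" for r'
    proof
      assume "R r' r"
      then have "g (r - 1)" using R[of r' r] that \<open>r < m\<close> by auto
      moreover have "r = 0 \<or> \<not> g (r - 1)" using bl_start[of x g 0 m] x unfolding BL_def by auto
      ultimately show False using that by auto
    qed
    ultimately show "r \<in> {r. r < m \<and> (\<forall>r'<r. \<not> R r' r)}" by auto
  qed
  have srt: "sorted_list_of_set {r. r < m \<and> (\<forall>r'<r. \<not> R r' r)} = map fst BL"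
    unfolding st using chain_sorted[OF ch]
    by (metis sorted_list_of_set.idem_if_sorted_distinct strict_sorted_iff)
  have cl: "{i. i < m \<and> R (fst x) i} = {fst x..<snd x}" if x: "x \<in> set BL" for x
  proof -
    have ab: "fst x < snd x" "snd x \<le> m" using chain_ge[OF ch x] by auto
    have ins: "\<And>k. fst x \<le> k \<Longrightarrow> Suc k < snd x \<Longrightarrow> g k" using bl_inside[of x g 0 m] x unfolding BL_def by auto
    have sta: "fst x = 0 \<or> \<not> g (fst x - 1)" using bl_start[of x g 0 m] x unfolding BL_def by auto
    have en: "snd x = m \<or> \<not> g (snd x - 1)" using bl_end[of x g 0 m] x unfolding BL_def by auto
    show ?thesis
    proof (intro equalityI subsetI)
      fix i assume "i \<in> {fst x..<snd x}"
      then have i: "fst x \<le> i" "i < snd x" by auto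
      have "R (fst x) i" using R[of "fst x" i] i ab ins by auto
      then show "i \<in> {i. i < m \<and> R (fst x) i}" using i ab by auto
    next
      fix i assume "i \<in> {i. i < m \<and> R (fst x) i}"
      then have i: "i < m" "\<forall>k. min (fst x) i \<le> k \<and> k < max (fst x) i \<longrightarrow> g k"
        using R[of "fst x" i] ab by auto
      have "\<not> i < fst x"
      proof
        assume "i < fst x"
        then have "g (fst x - 1)" using i(2) by auto
        then show False using sta \<open>i < fst x\<close> by auto
      qed
      moreover have "\<not> snd x \<le> i"
      proof
        assume "snd x \<le> i"
        moreover have "fst x \<le> snd x - 1" "snd x - 1 < i" using ab \<open>snd x \<le> i\<close> by auto
        ultimately have "g (snd x - 1)" using i(2) ab by auto
        then show False using en \<open>snd x \<le> i\<close> i(1) by auto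
      qed
      ultimately show "i \<in> {fst x..<snd x}" by auto
    qed
  qed
  show ?thesis
    unfolding classes_def srt BL_def[symmetric] using cl by auto
qed

lemma merge_bl:
  "length xs = i + n \<Longrightarrow> merge_modes (drop i xs) =
     map (\<lambda>x. (\<Prod>k\<in>{fst x..<snd x}. fst (xs ! k), snd (xs ! fst x)))
       (bl (\<lambda>k. snd (xs ! Suc k) = fst (xs ! k) * snd (xs ! k)) i n)"
proof (induction n arbitrary: i)
  case 0 then show ?case by simp
next
  case (Suc n)
  define G where "G = (\<lambda>k. snd (xs ! Suc k) = fst (xs ! k) * snd (xs ! k))"
  define F where "F = (\<lambda>x. (\<Prod>k\<in>{fst x..<snd x}. fst (xs ! k), snd (xs ! fst (x::nat\<times>nat))))"
  have dr: "drop i xs = xs ! i # drop (Suc i) xs" using Suc.prems by (simp add: Cons_nth_drop_Suc)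
  have IH: "merge_modes (drop (Suc i) xs) = map F (bl G (Suc i) n)"
    using Suc.IH[of "Suc i"] Suc.prems unfolding F_def G_def by simp
  have main: "merge_modes (drop i xs) = map F (bl G i (Suc n))"
  proof (cases rule: bl_Suc_cases[of n G i])
    case one
    then have "drop (Suc i) xs = []" using Suc.prems by simp
    then show ?thesis using dr one by (simp add: F_def)
  next
    case (more a b r)
    have Fab: "F (a, b) = (\<Prod>k\<in>{Suc i..<b}. fst (xs ! k), snd (xs ! Suc i))" using more by (simp add: F_def)
    have Fib: "F (i, b) = (fst (xs ! i) * (\<Prod>k\<in>{Suc i..<b}. fst (xs ! k)), snd (xs ! i))"
      using more by (simp add: F_def prod.atLeast_Suc_lessThan)
    have Fii: "F (i, Suc i) = xs ! i" by (simp add: F_def)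
    have mm: "merge_modes (drop i xs) = (if G i then (fst (xs ! i) * (\<Prod>k\<in>{Suc i..<b}. fst (xs ! k)), snd (xs ! i)) # map F r
        else xs ! i # F (a, b) # map F r)"
      using dr IH more(1) Fab by (simp add: G_def)
    show ?thesis using mm more(5) Fib Fii by simp
  qed
  then show ?case unfolding F_def G_def by simp
qed

lemma chain_prod: "chain i e xs \<Longrightarrow> K < length xs \<Longrightarrow>
  prod_list (map (\<lambda>x. \<Prod>k\<in>{fst x..<snd x}. h k) (take K xs)) = (\<Prod>k\<in>{i..<fst (xs ! K)}. (h k :: nat))"
proof (induction xs arbitrary: i K)
  case Nil then show ?case by simp
next
  case (Cons y r)
  show ?case
  proof (cases K)
    case 0 then show ?thesis using Cons.prems by simp
  next
    case (Suc K')
    have c: "fst y = i" "fst y < snd y" "chain (snd y) e r" using Cons.prems by auto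
    have K': "K' < length r" using Cons.prems Suc by simp
    have le: "snd y \<le> fst (r ! K')" using chain_ge[OF c(3), of "r ! K'"] K' by auto
    have "prod_list (map (\<lambda>x. \<Prod>k\<in>{fst x..<snd x}. h k) (take K (y # r))) =
        (\<Prod>k\<in>{i..<snd y}. h k) * (\<Prod>k\<in>{snd y..<fst (r ! K')}. h k)"
      using Cons.IH[OF c(3) K'] Suc c by simp
    also have "\<dots> = (\<Prod>k\<in>{i..<fst (r ! K')}. h k)"
      using le c by (intro prod.atLeastLessThan_concat) auto
    finally show ?thesis using Suc by simp
  qed
qed

lemma prod_list_take: "j \<le> length ts \<Longrightarrow> prod_list (take j ts) = (\<Prod>k\<in>{0..<j}. (ts ! k :: nat))"
  by (simp add: prod.list_conv_set_nth)

lemma map_nth_filter: "map (nth xs) (filter (\<lambda>i. P (xs ! i)) [0..<length xs]) = filter P xs"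
proof -
  have "filter P xs = filter P (map (nth xs) [0..<length xs])" by (simp add: map_nth)
  also have "\<dots> = map (nth xs) (filter (P \<circ> nth xs) [0..<length xs])" by (rule filter_map)
  finally show ?thesis by (simp add: comp_def)
qed

lemma sq_dom_filter: "sq_dom xs = filter (\<lambda>x. x \<noteq> 1) xs"
  unfolding sq_dom_def kept_def using map_nth_filter[of xs "\<lambda>x. x \<noteq> 1"] by simp

lemma length_kept: "length (kept xs) = length (sq_dom xs)"
  by (simp add: sq_dom_def)

lemma map_nth_upt_take: "j \<le> length ts \<Longrightarrow> map (nth ts) [0..<j] = take j ts"
  by (simp add: list_eq_iff_nth_eq)

lemma renum_eq: "j \<le> length ts \<Longrightarrow> renum ts j = length (filter (\<lambda>x. x \<noteq> 1) (take j ts))"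
proof -
  assume j: "j \<le> length ts"
  have "renum ts j = length (filter ((\<lambda>x. x \<noteq> 1) \<circ> nth ts) [0..<j])" by (simp add: renum_def comp_def)
  also have "\<dots> = length (filter (\<lambda>x. x \<noteq> 1) (map (nth ts) [0..<j]))" by (simp add: length_filter_map)
  finally show ?thesis using map_nth_upt_take[OF j] by simp
qed

lemma filter_take_drop: "filter P xs = filter P (take y xs) @ filter P (drop y xs)"
  by (metis append_take_drop_id filter_append)

lemma renum_nth: assumes "y < length ts" "ts ! y \<noteq> 1"
  shows "renum ts y < length (sq_dom ts) \<and> sq_dom ts ! renum ts y = ts ! y"
proof -
  have d: "drop y ts = ts ! y # drop (Suc y) ts" using assms by (simp add: Cons_nth_drop_Suc)
  have "sq_dom ts = filter (\<lambda>x. x \<noteq> 1) (take y ts) @ ts ! y # filter (\<lambda>x. x \<noteq> 1) (drop (Suc y) ts)"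
    unfolding sq_dom_filter using filter_take_drop[of "\<lambda>x. x \<noteq> 1" ts y] d assms by simp
  then show ?thesis using renum_eq[of y ts] assms by (simp add: nth_append)
qed

lemma prod_list_filter1: "prod_list (filter (\<lambda>x. x \<noteq> 1) xs) = prod_list (xs :: nat list)"
  by (induction xs) auto

lemma renum_prod: assumes "y \<le> length ts"
  shows "prod_list (take (renum ts y) (sq_dom ts)) = prod_list (take y ts)"
proof -
  have "take (renum ts y) (sq_dom ts) = filter (\<lambda>x. x \<noteq> 1) (take y ts)"
    unfolding sq_dom_filter renum_eq[OF assms]
    using filter_take_drop[of "\<lambda>x. x \<noteq> 1" ts y] by simp
  then show ?thesis using prod_list_filter1[of "take y ts"] by simp
qed

lemma renum_mono: assumes "y < y'" "ts ! y \<noteq> 1"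
  shows "renum ts y < renum ts y'"
proof -
  have "[0..<y'] = [0..<y] @ y # [Suc y..<y']" using assms
    by (metis le0 le_add_diff_inverse less_imp_le_nat upt_add_eq_append upt_conv_Cons)
  then show ?thesis using assms unfolding renum_def by simp
qed

lemma renum_inj: assumes "ts ! y \<noteq> 1" "ts ! y' \<noteq> 1" "renum ts y = renum ts y'"
  shows "y = y'"
  using renum_mono[of y y' ts] renum_mono[of y' y ts] assms by (cases "y < y'"; cases "y' < y") auto

lemma kept_props: "p < length (kept xs) \<Longrightarrow> kept xs ! p < length xs \<and> xs ! (kept xs ! p) \<noteq> 1"
proof -
  assume "p < length (kept xs)"
  then have "kept xs ! p \<in> set (kept xs)" by simp
  then show ?thesis unfolding kept_def by simp
qed

lemma kept_inj: "p < length (kept xs) \<Longrightarrow> p' < length (kept xs) \<Longrightarrow> kept xs ! p = kept xs ! p' \<Longrightarrow> p = p'"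
  unfolding kept_def using distinct_filter distinct_upt nth_eq_iff_index_eq by metis

lemma sq_dom_nth: "p < length (kept xs) \<Longrightarrow> sq_dom xs ! p = xs ! (kept xs ! p)"
  by (simp add: sq_dom_def)

lemma sq_map_nth: "p < length (kept ss) \<Longrightarrow> sq_map ss ts al ! p = map_option (renum ts) (al ! (kept ss ! p))"
  by (simp add: sq_map_def)

lemma length_sq_map: "length (sq_map ss ts al) = length (kept ss)"
  by (simp add: sq_map_def)

lemma squeeze_zip:
  assumes tm: "is_tuple_mor ss0 ts0 al0"
  shows "squeeze_l (zip ss0 (enc_strides ts0 al0)) =
    zip (sq_dom ss0) (map (\<lambda>oo. case oo of None \<Rightarrow> 0 | Some j \<Rightarrow> prod_list (take j (sq_dom ts0))) (sq_map ss0 ts0 al0))"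
proof -
  define es where "es = enc_strides ts0 al0"
  define str where "str = (\<lambda>oo. case oo of None \<Rightarrow> 0 | Some j \<Rightarrow> prod_list (take j (sq_dom ts0)))"
  have les: "length es = length ss0" using tm unfolding es_def enc_strides_def is_tuple_mor_def by simp
  have z: "zip ss0 es = map (\<lambda>i. (ss0 ! i, es ! i)) [0..<length ss0]"
    using les by (intro nth_equalityI) auto
  have "squeeze_l (zip ss0 es) = map (\<lambda>i. (ss0 ! i, es ! i)) (kept ss0)"
    unfolding squeeze_l_def z kept_def filter_map by (simp add: comp_def)
  also have "\<dots> = map (\<lambda>i. (ss0 ! i, str (map_option (renum ts0) (al0 ! i)))) (kept ss0)"
  proof (rule map_cong[OF refl])
    fix i assume "i \<in> set (kept ss0)"
    then have i: "i < length ss0" "ss0 ! i \<noteq> 1" unfolding kept_def by auto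
    have "es ! i = str (map_option (renum ts0) (al0 ! i))"
    proof (cases "al0 ! i")
      case None then show ?thesis using i tm unfolding es_def enc_strides_def str_def is_tuple_mor_def by simp
    next
      case (Some j)
      then have "j < length ts0" using i tm unfolding is_tuple_mor_def by auto
      then have "prod_list (take (renum ts0 j) (sq_dom ts0)) = prod_list (take j ts0)"
        by (intro renum_prod) simp
      then show ?thesis using i tm Some
        unfolding es_def enc_strides_def str_def is_tuple_mor_def by simp
    qed
    then show "(ss0 ! i, es ! i) = (ss0 ! i, str (map_option (renum ts0) (al0 ! i)))" by simp
  qed
  also have "\<dots> = zip (sq_dom ss0) (map str (sq_map ss0 ts0 al0))"
    unfolding sq_dom_def sq_map_def by (simp add: zip_map_map map2_map_map zip_same_conv_map)
  finally show ?thesis unfolding es_def str_def .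
qed

lemma prod_list_pos: "\<forall>x\<in>set xs. 0 < x \<Longrightarrow> 0 < prod_list (xs :: nat list)"
  by (induction xs) auto

locale sqm =
  fixes ss0 ts0 :: "nat list" and al0 :: "nat option list"
  assumes pos_s: "\<forall>x\<in>set ss0. 0 < x" and pos_t: "\<forall>x\<in>set ts0. 0 < x"
    and tm: "is_tuple_mor ss0 ts0 al0"
begin

definition "ss = sq_dom ss0"
definition "ts = sq_dom ts0"
definition "be = sq_map ss0 ts0 al0"
definition "m = length ss"
definition "n = length ts"
definition "PT j = prod_list (take j ts)"
definition "str oo = (case oo of None \<Rightarrow> 0 | Some j \<Rightarrow> PT j)"
definition "ds = map str be"
definition "gd k = ((be ! k = None \<and> be ! Suc k = None) \<or> (\<exists>a. be ! k = Some a \<and> be ! Suc k = Some (Suc a)))"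
definition "gc k = (\<exists>p. Suc p < m \<and> be ! p = Some k \<and> be ! Suc p = Some (Suc k))"

lemma len_be: "length be = m"
  unfolding be_def m_def ss_def by (simp add: length_sq_map length_kept)

lemma len_ds: "length ds = m"
  unfolding ds_def by (simp add: len_be)

lemma ss_ge2: "p < m \<Longrightarrow> 2 \<le> ss ! p"
proof -
  assume "p < m"
  then have "ss ! p \<in> set ss" unfolding m_def by simp
  then have "ss ! p \<noteq> 1" "ss ! p \<in> set ss0" unfolding ss_def sq_dom_filter by auto
  then show ?thesis using pos_s by fastforce
qed

lemma ts_ge2: "q < n \<Longrightarrow> 2 \<le> ts ! q"
proof -
  assume "q < n"
  then have "ts ! q \<in> set ts" unfolding n_def by simp
  then have "ts ! q \<noteq> 1" "ts ! q \<in> set ts0" unfolding ts_def sq_dom_filter by auto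
  then show ?thesis using pos_t by fastforce
qed

lemma be_nth: "p < m \<Longrightarrow> be ! p = map_option (renum ts0) (al0 ! (kept ss0 ! p))"
  unfolding be_def m_def ss_def by (simp add: sq_map_nth length_kept)

lemma be_some: assumes p: "p < m" and b: "be ! p = Some j" shows "j < n \<and> ts ! j = ss ! p"
proof -
  have pk: "p < length (kept ss0)" using p unfolding m_def ss_def by (simp add: length_kept)
  define i where "i = kept ss0 ! p"
  have i: "i < length ss0" "ss0 ! i \<noteq> 1" using kept_props[OF pk] unfolding i_def by auto
  obtain y where y: "al0 ! i = Some y" "j = renum ts0 y" using b be_nth[OF p] unfolding i_def by auto
  have "y < length ts0" "ss0 ! i = ts0 ! y" using tm i y unfolding is_tuple_mor_def by auto
  then show ?thesis using renum_nth[of y ts0] i y sq_dom_nth[OF pk] unfolding n_def ts_def ss_def i_def by auto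
qed

lemma be_inj: assumes "p < m" "p' < m" "be ! p = Some j" "be ! p' = Some j" shows "p = p'"
proof -
  have pk: "p < length (kept ss0)" "p' < length (kept ss0)" using assms unfolding m_def ss_def by (auto simp add: length_kept)
  define i where "i = kept ss0 ! p"
  define i' where "i' = kept ss0 ! p'"
  have i: "i < length ss0" "ss0 ! i \<noteq> 1" using kept_props[OF pk(1)] unfolding i_def by auto
  have i': "i' < length ss0" "ss0 ! i' \<noteq> 1" using kept_props[OF pk(2)] unfolding i'_def by auto
  obtain y where y: "al0 ! i = Some y" "j = renum ts0 y" using assms be_nth unfolding i_def by fastforce
  obtain y' where y': "al0 ! i' = Some y'" "j = renum ts0 y'" using assms be_nth unfolding i'_def by fastforce
  have "ts0 ! y \<noteq> 1" "ts0 ! y' \<noteq> 1" using tm i i' y y' unfolding is_tuple_mor_def by auto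
  then have "y = y'" using renum_inj y y' by metis
  then have "i = i'" using tm i i' y y' unfolding is_tuple_mor_def by auto
  then show ?thesis using kept_inj[OF pk] unfolding i_def i'_def by simp
qed

lemma PT_pos: "j \<le> n \<Longrightarrow> 0 < PT j"
proof -
  assume j: "j \<le> n"
  have "\<forall>x\<in>set (take j ts). 0 < x"
  proof
    fix x assume "x \<in> set (take j ts)"
    then obtain q where "q < length (take j ts)" "x = take j ts ! q" by (metis in_set_conv_nth)
    then show "0 < x" using ts_ge2[of q] j unfolding n_def by auto
  qed
  then show ?thesis unfolding PT_def by (rule prod_list_pos)
qed

lemma PT_Suc: "j < n \<Longrightarrow> PT (Suc j) = ts ! j * PT j"
  unfolding PT_def n_def by (simp add: take_Suc_conv_app_nth)

lemma PT_mono: "j < j' \<Longrightarrow> j' \<le> n \<Longrightarrow> PT j < PT j'"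
proof (induction j')
  case 0 then show ?case by simp
next
  case (Suc j')
  have a: "PT (Suc j') = ts ! j' * PT j'" using Suc.prems PT_Suc by simp
  have b: "2 \<le> ts ! j'" using Suc.prems ts_ge2 by simp
  have c: "0 < PT j'" using Suc.prems PT_pos by simp
  have d: "PT j' < PT (Suc j')" using a b c by (metis less_le_trans mult_less_mono1 mult_1 one_less_numeral_iff semiring_norm(76))
  show ?case
  proof (cases "j = j'")
    case True then show ?thesis using d by simp
  next
    case False then show ?thesis using Suc d by auto
  qed
qed

lemma PT_inj: "j \<le> n \<Longrightarrow> j' \<le> n \<Longrightarrow> PT j = PT j' \<Longrightarrow> j = j'"
  using PT_mono[of j j'] PT_mono[of j' j] by (cases "j < j'"; cases "j' < j") auto

lemma glue_eq: assumes k: "Suc k < m" shows "(ds ! Suc k = ss ! k * ds ! k) \<longleftrightarrow> gd k"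
proof -
  have dk: "ds ! k = str (be ! k)" "ds ! Suc k = str (be ! Suc k)" using k len_be unfolding ds_def by auto
  have sk: "0 < ss ! k" using ss_ge2[of k] k by simp
  show ?thesis
  proof (cases "be ! k")
    case None
    show ?thesis
    proof (cases "be ! Suc k")
      case None then show ?thesis using \<open>be ! k = None\<close> dk unfolding gd_def str_def by simp
    next
      case (Some j')
      have "j' < n" using be_some[OF k Some] by simp
      then show ?thesis using None Some dk PT_pos[of j'] unfolding gd_def str_def by simp
    qed
  next
    case (Some j)
    have j: "j < n" "ts ! j = ss ! k" using be_some[of k j] k Some by auto
    show ?thesis
    proof (cases "be ! Suc k")
      case None then show ?thesis using Some dk PT_pos[of j] j sk unfolding gd_def str_def by simp
    next
      case (Some j')
      have j': "j' < n" using be_some[OF k Some] by simp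
      have "ss ! k * PT j = PT (Suc j)" using PT_Suc[of j] j by simp
      then have "(ds ! Suc k = ss ! k * ds ! k) \<longleftrightarrow> PT j' = PT (Suc j)"
        using dk Some \<open>be ! k = Some j\<close> unfolding str_def by simp
      also have "\<dots> \<longleftrightarrow> j' = Suc j" using PT_inj[of j' "Suc j"] j j' by auto
      finally show ?thesis using Some \<open>be ! k = Some j\<close> unfolding gd_def by simp
    qed
  qed
qed

end

context sqm begin

lemma drel_from_glue: "(\<forall>k. i \<le> k \<and> k < i + d \<longrightarrow> gd k) \<Longrightarrow> drel be i (i + d)"
proof (induction d)
  case 0
  have ki: "k = i" if "i \<le> k \<and> k \<le> i" for k using that by simp
  show ?case
  proof (cases "be ! i")
    case None
    have "\<forall>k. i \<le> k \<and> k \<le> i \<longrightarrow> be ! k = None"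
    proof (intro allI impI)
      fix k assume "i \<le> k \<and> k \<le> i"
      then have "k = i" using ki by blast
      then show "be ! k = None" using None by simp
    qed
    then have "i \<le> i + 0 \<and> ((\<forall>k. i \<le> k \<and> k \<le> i + 0 \<longrightarrow> be ! k = None) \<or>
      (\<forall>k. i \<le> k \<and> k \<le> i + 0 \<longrightarrow> be ! i \<noteq> None \<and> be ! k = Some (the (be ! i) + (k - i))))"
      unfolding add_0_right by blast
    then show ?thesis unfolding drel_def .
  next
    case (Some c)
    have "\<forall>k. i \<le> k \<and> k \<le> i \<longrightarrow> be ! i \<noteq> None \<and> be ! k = Some (the (be ! i) + (k - i))"
    proof (intro allI impI)
      fix k assume "i \<le> k \<and> k \<le> i"
      then have "k = i" using ki by blast
      then show "be ! i \<noteq> None \<and> be ! k = Some (the (be ! i) + (k - i))" using Some by simp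
    qed
    then have "i \<le> i + 0 \<and> ((\<forall>k. i \<le> k \<and> k \<le> i + 0 \<longrightarrow> be ! k = None) \<or>
      (\<forall>k. i \<le> k \<and> k \<le> i + 0 \<longrightarrow> be ! i \<noteq> None \<and> be ! k = Some (the (be ! i) + (k - i))))"
      unfolding add_0_right by blast
    then show ?thesis unfolding drel_def .
  qed
next
  case (Suc d)
  have IH: "drel be i (i + d)" using Suc by auto
  have g: "gd (i + d)" using Suc.prems by auto
  show ?case
  proof (cases "\<forall>k. i \<le> k \<and> k \<le> i + d \<longrightarrow> be ! k = None")
    case True
    have "be ! (i + d) = None" using True[rule_format, of "i + d"] by simp
    then have "be ! Suc (i + d) = None" using g unfolding gd_def by auto
    have "\<forall>k. i \<le> k \<and> k \<le> i + Suc d \<longrightarrow> be ! k = None"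
    proof (intro allI impI)
      fix k assume "i \<le> k \<and> k \<le> i + Suc d"
      then have "i \<le> k \<and> k \<le> i + d \<or> k = Suc (i + d)" by auto
      then show "be ! k = None"
      proof (elim disjE)
        assume "i \<le> k \<and> k \<le> i + d" then show ?thesis using True by blast
      next
        assume "k = Suc (i + d)" then show ?thesis using \<open>be ! Suc (i + d) = None\<close> by simp
      qed
    qed
    moreover have "i \<le> i + Suc d" by simp
    ultimately show ?thesis unfolding drel_def by blast
  next
    case False
    then have B: "\<forall>k. i \<le> k \<and> k \<le> i + d \<longrightarrow> be ! i \<noteq> None \<and> be ! k = Some (the (be ! i) + (k - i))"
      using IH unfolding drel_def by blast
    have "be ! (i + d) = Some (the (be ! i) + d)" using B[rule_format, of "i + d"] by simp
    then have "be ! Suc (i + d) = Some (the (be ! i) + Suc d)" using g unfolding gd_def by auto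
    have "\<forall>k. i \<le> k \<and> k \<le> i + Suc d \<longrightarrow> be ! i \<noteq> None \<and> be ! k = Some (the (be ! i) + (k - i))"
    proof (intro allI impI)
      fix k assume "i \<le> k \<and> k \<le> i + Suc d"
      then have "i \<le> k \<and> k \<le> i + d \<or> k = Suc (i + d)" by auto
      then show "be ! i \<noteq> None \<and> be ! k = Some (the (be ! i) + (k - i))"
      proof (elim disjE)
        assume "i \<le> k \<and> k \<le> i + d" then show ?thesis using B by blast
      next
        assume k: "k = Suc (i + d)"
        have "be ! i \<noteq> None" using B[rule_format, of i] by simp
        moreover have "k - i = Suc d" using k by simp
        ultimately show ?thesis using \<open>be ! Suc (i + d) = Some (the (be ! i) + Suc d)\<close> k by simp
      qed
    qed
    moreover have "i \<le> i + Suc d" by simp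
    ultimately show ?thesis unfolding drel_def by blast
  qed
qed

lemma glue_from_drel: assumes "drel be i i'" "i \<le> k" "k < i'" shows "gd k"
proof -
  have d: "i \<le> i'" using assms(1) unfolding drel_def by (rule conjunct1)
  consider (A) "\<forall>k. i \<le> k \<and> k \<le> i' \<longrightarrow> be ! k = None"
    | (B) "\<forall>k. i \<le> k \<and> k \<le> i' \<longrightarrow> be ! i \<noteq> None \<and> be ! k = Some (the (be ! i) + (k - i))"
    using assms(1) unfolding drel_def by blast
  then show ?thesis
  proof cases
    case A
    have "be ! k = None" using A[rule_format, of k] assms(2,3) by simp
    moreover have "be ! Suc k = None" using A[rule_format, of "Suc k"] assms(2,3) by simp
    ultimately show ?thesis unfolding gd_def by simp
  next
    case B
    have "be ! k = Some (the (be ! i) + (k - i))" using B[rule_format, of k] assms(2,3) by simp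
    moreover have "be ! Suc k = Some (the (be ! i) + (Suc k - i))" using B[rule_format, of "Suc k"] assms(2,3) by simp
    moreover have "the (be ! i) + (Suc k - i) = Suc (the (be ! i) + (k - i))" using assms(2) by simp
    ultimately show ?thesis unfolding gd_def by simp
  qed
qed

lemma drel_iff: "i \<le> i' \<Longrightarrow> drel be i i' \<longleftrightarrow> (\<forall>k. i \<le> k \<and> k < i' \<longrightarrow> gd k)"
  using drel_from_glue[of i "i' - i"] glue_from_drel[of i i'] by auto

lemma dsim_iff: "dsim be i i' \<longleftrightarrow> (\<forall>k. min i i' \<le> k \<and> k < max i i' \<longrightarrow> gd k)"
proof (cases "i \<le> i'")
  case True
  have "drel be i' i \<Longrightarrow> i = i'" unfolding drel_def using True by simp
  then show ?thesis unfolding dsim_def using drel_iff[OF True] True by (auto simp: min_def max_def)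
next
  case False
  then have F: "i' \<le> i" by simp
  have "drel be i i' \<Longrightarrow> i = i'" unfolding drel_def using F by simp
  then show ?thesis unfolding dsim_def using drel_iff[OF F] F by (auto simp: min_def max_def)
qed

lemma run_from_glue: "(\<forall>k. j \<le> k \<and> k < j + Suc d \<longrightarrow> gc k) \<Longrightarrow>
   \<exists>i. i + Suc d < m \<and> (\<forall>t \<le> Suc d. be ! (i + t) = Some (j + t))"
proof (induction d)
  case 0
  then obtain p where p: "Suc p < m" "be ! p = Some j" "be ! Suc p = Some (Suc j)" unfolding gc_def by auto
  have "\<forall>t \<le> Suc 0. be ! (p + t) = Some (j + t)"
  proof (intro allI impI)
    fix t :: nat assume "t \<le> Suc 0"
    then have "t = 0 \<or> t = 1" by auto
    then show "be ! (p + t) = Some (j + t)" using p by auto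
  qed
  then show ?case using p by auto
next
  case (Suc d)
  then obtain i where i: "i + Suc d < m" "\<forall>t \<le> Suc d. be ! (i + t) = Some (j + t)" by auto
  have "gc (j + Suc d)" using Suc.prems by simp
  then obtain p where p: "Suc p < m" "be ! p = Some (j + Suc d)" "be ! Suc p = Some (Suc (j + Suc d))"
    unfolding gc_def by auto
  have "be ! (i + Suc d) = Some (j + Suc d)" using i(2)[rule_format, of "Suc d"] by simp
  then have "p = i + Suc d" using be_inj[of p "i + Suc d"] p i by simp
  have "\<forall>t \<le> Suc (Suc d). be ! (i + t) = Some (j + t)"
  proof (intro allI impI)
    fix t assume "t \<le> Suc (Suc d)"
    then have "t \<le> Suc d \<or> t = Suc (Suc d)" by auto
    then show "be ! (i + t) = Some (j + t)" using i p \<open>p = i + Suc d\<close> by auto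
  qed
  then show ?case using p \<open>p = i + Suc d\<close> by auto
qed

lemma crel_iff: "j \<le> j' \<Longrightarrow> crel be j j' \<longleftrightarrow> (\<forall>k. j \<le> k \<and> k < j' \<longrightarrow> gc k)"
proof -
  assume jj: "j \<le> j'"
  show ?thesis
  proof
    assume c: "crel be j j'"
    show "\<forall>k. j \<le> k \<and> k < j' \<longrightarrow> gc k"
    proof (intro allI impI)
      fix k assume k: "j \<le> k \<and> k < j'"
      then have "j \<noteq> j'" by simp
      then obtain i where i: "i + (j' - j) < length be" "\<forall>t \<le> j' - j. be ! (i + t) = Some (j + t)"
        using c unfolding crel_def by auto
      have "k - j \<le> j' - j" using k by arith
      then have "be ! (i + (k - j)) = Some (j + (k - j))" using i(2) by blast
      then have "be ! (i + (k - j)) = Some k" using k by simp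
      moreover have "be ! Suc (i + (k - j)) = Some (Suc k)"
        using i(2)[rule_format, of "Suc (k - j)"] k by (simp add: Suc_diff_le Suc_le_eq less_diff_conv2)
      moreover have "k - j < j' - j" using k by arith
      then have "Suc (i + (k - j)) < m" using i(1) len_be by linarith
      ultimately show "gc k" unfolding gc_def by blast
    qed
  next
    assume g: "\<forall>k. j \<le> k \<and> k < j' \<longrightarrow> gc k"
    show "crel be j j'"
    proof (cases "j = j'")
      case True then show ?thesis unfolding crel_def by simp
    next
      case False
      define d where "d = j' - j - 1"
      have d: "j' = j + Suc d" using jj False unfolding d_def by simp
      obtain i where "i + Suc d < m" "\<forall>t \<le> Suc d. be ! (i + t) = Some (j + t)"
        using run_from_glue[of j d] g d by auto
      then show ?thesis unfolding crel_def using d jj len_be by auto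
    qed
  qed
qed

lemma csim_iff: "csim be j j' \<longleftrightarrow> (\<forall>k. min j j' \<le> k \<and> k < max j j' \<longrightarrow> gc k)"
proof (cases "j \<le> j'")
  case True
  have "crel be j' j \<Longrightarrow> j = j'" unfolding crel_def using True by simp
  then show ?thesis unfolding csim_def using crel_iff[OF True] True by (auto simp: min_def max_def)
next
  case False
  then have F: "j' \<le> j" by simp
  have "crel be j j' \<Longrightarrow> j = j'" unfolding crel_def using F by simp
  then show ?thesis unfolding csim_def using crel_iff[OF F] F by (auto simp: min_def max_def)
qed

end

lemma congruent_len: "congruent X Y \<Longrightarrow> length (flat X) = length (flat Y)"
proof (induction X Y rule: congruent.induct)
  case (2 xs ys)
  then have "list_all2 congruent xs ys" by simp
  then have "length (concat (map flat xs)) = length (concat (map flat ys))"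
    using 2 by (induction xs ys rule: list_all2_induct) auto
  then show ?case by simp
qed auto

lemma list_unique:
  "(\<And>x (D1 :: 'b ntup) D2. x \<in> set (xs :: 'a ntup list) \<Longrightarrow> congruent x D1 \<Longrightarrow> congruent x D2 \<Longrightarrow> flat D1 = flat D2 \<Longrightarrow> D1 = D2) \<Longrightarrow>
   list_all2 congruent xs (ys1 :: 'b ntup list) \<Longrightarrow> list_all2 congruent xs ys2 \<Longrightarrow>
   concat (map flat ys1) = concat (map flat ys2) \<Longrightarrow> ys1 = ys2"
proof (induction xs arbitrary: ys1 ys2)
  case Nil then show ?case by simp
next
  case (Cons x xs)
  obtain d1 r1 where y1: "ys1 = d1 # r1" "congruent x d1" "list_all2 congruent xs r1"
    using Cons.prems(2) by (cases ys1) auto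
  obtain d2 r2 where y2: "ys2 = d2 # r2" "congruent x d2" "list_all2 congruent xs r2"
    using Cons.prems(3) by (cases ys2) auto
  have l: "length (flat d1) = length (flat d2)" using congruent_len y1(2) y2(2) by metis
  have "flat d1 @ concat (map flat r1) = flat d2 @ concat (map flat r2)" using Cons.prems(4) y1 y2 by simp
  then have e: "flat d1 = flat d2" "concat (map flat r1) = concat (map flat r2)"
    using l by (auto simp: append_eq_append_conv)
  have "d1 = d2" using Cons.prems(1)[of x d1 d2] y1 y2 e by simp
  moreover have "r1 = r2"
    by (rule Cons.IH[of r1 r2]) (use Cons.prems(1) y1 y2 e in auto)
  ultimately show ?case using y1 y2 by simp
qed

lemma congruent_unique: "congruent (X :: 'a ntup) (D1 :: 'b ntup) \<Longrightarrow> congruent X D2 \<Longrightarrow> flat D1 = flat D2 \<Longrightarrow> D1 = D2"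
proof (induction X arbitrary: D1 D2)
  case (Lf x)
  then show ?case by (cases D1; cases D2) auto
next
  case (Nd xs)
  obtain ys1 where 1: "D1 = Nd ys1" using Nd.prems(1) by (cases D1) auto
  obtain ys2 where 2: "D2 = Nd ys2" using Nd.prems(2) by (cases D2) auto
  have "ys1 = ys2"
    by (rule list_unique[of xs ys1 ys2]) (use Nd.IH Nd.prems 1 2 in auto)
  then show ?case using 1 2 by simp
qed

lemma list_exists:
  "(\<And>s (xs :: 'b list). s \<in> set (ss :: 'a ntup list) \<Longrightarrow> length xs = length (flat s) \<Longrightarrow> \<exists>D :: 'b ntup. congruent s D \<and> flat D = xs) \<Longrightarrow>
   length xs = length (concat (map flat ss)) \<Longrightarrow>
   \<exists>Ds. list_all2 congruent ss Ds \<and> concat (map flat Ds) = (xs :: 'b list)"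
proof (induction ss arbitrary: xs)
  case Nil then show ?case by simp
next
  case (Cons s ss)
  define l where "l = length (flat s)"
  obtain D where D: "congruent s D" "flat D = take l xs"
    using Cons.prems(1)[of s "take l xs"] Cons.prems(2) unfolding l_def by auto
  obtain Ds where Ds: "list_all2 congruent ss Ds" "concat (map flat Ds) = drop l xs"
    using Cons.IH[of "drop l xs"] Cons.prems unfolding l_def by auto
  have "list_all2 congruent (s # ss) (D # Ds) \<and> concat (map flat (D # Ds)) = xs"
    using D Ds by simp
  then show ?case by blast
qed

lemma congruent_exists: "length xs = length (flat (S :: 'a ntup)) \<Longrightarrow> \<exists>D :: 'b ntup. congruent S D \<and> flat D = (xs :: 'b list)"
proof (induction S arbitrary: xs)
  case (Lf x)
  then obtain a where "xs = [a]" by (cases xs) auto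
  then show ?case by (intro exI[of _ "Lf a"]) simp
next
  case (Nd ss)
  obtain Ds where "list_all2 congruent ss Ds" "concat (map flat Ds) = xs"
    using list_exists[of ss xs] Nd by auto
  then show ?case by (intro exI[of _ "Nd Ds"]) simp
qed

lemma the_congruent: "congruent S D \<Longrightarrow> flat D = xs \<Longrightarrow> (THE D. congruent S D \<and> flat D = xs) = D"
  by (rule the_equality) (auto intro: congruent_unique)

lemma flat_the: "length xs = length (flat S) \<Longrightarrow> flat (THE D. congruent S D \<and> flat D = (xs :: 'b list)) = xs"
  using congruent_exists[of xs S] the_congruent by metis

lemma bl_start_mem: assumes "r < N" "r = 0 \<or> \<not> g (r - 1)" shows "\<exists>K < length (bl g 0 N). fst (bl g 0 N ! K) = r"
proof -
  have ch: "chain 0 N (bl g 0 N)" using chain_bl[of 0 N g] by simp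
  obtain x where x: "x \<in> set (bl g 0 N)" "fst x \<le> r" "r < snd x" using chain_cover[OF ch, of r] assms by auto
  have "r = fst x"
  proof (rule ccontr)
    assume ne: "r \<noteq> fst x"
    then have "fst x \<le> r - 1" "Suc (r - 1) < snd x" using x by auto
    then have "g (r - 1)" using bl_inside[OF x(1)] by blast
    then show False using assms ne x by auto
  qed
  then show ?thesis using x(1) by (metis in_set_conv_nth)
qed

context sqm begin

definition "BD = bl gd 0 m"
definition "BC = bl gc 0 n"
definition "CCL = map (\<lambda>x. {fst x..<snd x}) BC"
definition "sbL = map (\<lambda>x. \<Prod>k\<in>{fst x..<snd x}. ss ! k) BD"
definition "tbL = map (\<lambda>x. \<Prod>k\<in>{fst x..<snd x}. ts ! k) BC"
definition "bbL = map (\<lambda>x. case be ! (fst x) of None \<Rightarrow> None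
                 | Some j \<Rightarrow> Some (THE K. K < length CCL \<and> j \<in> CCL ! K)) BD"
definition "ZS = map (\<lambda>x. (\<Prod>k\<in>{fst x..<snd x}. ss ! k, ds ! (fst x))) BD"

lemma chBD: "chain 0 m BD" unfolding BD_def using chain_bl[of 0 m gd] by simp
lemma chBC: "chain 0 n BC" unfolding BC_def using chain_bl[of 0 n gc] by simp

lemma coal_flat_eq: "coal_flat_l (zip ss0 (enc_strides ts0 al0)) = ZS"
proof -
  have sq: "squeeze_l (zip ss0 (enc_strides ts0 al0)) = zip ss ds"
    using squeeze_zip[OF tm] unfolding ss_def ds_def str_def PT_def ts_def be_def by simp
  define zs where "zs = zip ss ds"
  have lz: "length zs = 0 + m" unfolding zs_def m_def using len_ds m_def by simp
  have zk: "k < m \<Longrightarrow> zs ! k = (ss ! k, ds ! k)" for k unfolding zs_def using len_ds m_def by simp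
  have mb: "merge_modes zs = map (\<lambda>x. (\<Prod>k\<in>{fst x..<snd x}. fst (zs ! k), snd (zs ! fst x)))
       (bl (\<lambda>k. snd (zs ! Suc k) = fst (zs ! k) * snd (zs ! k)) 0 m)"
    using merge_bl[OF lz] by simp
  have bc: "bl (\<lambda>k. snd (zs ! Suc k) = fst (zs ! k) * snd (zs ! k)) 0 m = BD"
    unfolding BD_def
  proof (rule bl_cong)
    fix k assume "0 \<le> k" "Suc k < 0 + m"
    then have k: "Suc k < m" by simp
    then show "(snd (zs ! Suc k) = fst (zs ! k) * snd (zs ! k)) = gd k"
      using zk[of k] zk[of "Suc k"] glue_eq[OF k] by simp
  qed
  have "merge_modes zs = ZS"
    unfolding mb bc ZS_def
  proof (rule map_cong[OF refl])
    fix x assume x: "x \<in> set BD"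
    have b: "fst x < snd x" "snd x \<le> m" using chain_ge[OF chBD x] by auto
    have "(\<Prod>k\<in>{fst x..<snd x}. fst (zs ! k)) = (\<Prod>k\<in>{fst x..<snd x}. ss ! k)"
      by (rule prod.cong) (use b zk in auto)
    moreover have "snd (zs ! fst x) = ds ! fst x" using zk[of "fst x"] b by simp
    ultimately show "(\<Prod>k\<in>{fst x..<snd x}. fst (zs ! k), snd (zs ! fst x)) =
          (\<Prod>k\<in>{fst x..<snd x}. ss ! k, ds ! fst x)" by simp
  qed
  then show ?thesis unfolding coal_flat_l_def sq zs_def .
qed

lemma DC_eq: "classes (dsim be) m = map (\<lambda>x. {fst x..<snd x}) BD"
  unfolding BD_def by (rule classes_bl) (rule dsim_iff)

lemma CC_eq: "classes (csim be) n = CCL"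
  unfolding CCL_def BC_def by (rule classes_bl) (rule csim_iff)

lemma coal_data_eq: "coal_data ss0 ts0 al0 = (sbL, tbL, bbL)"
proof -
  have a: "coal_data ss0 ts0 al0 =
    (map (\<lambda>C. \<Prod>i\<in>C. ss ! i) (classes (dsim be) m),
     map (\<lambda>C. \<Prod>j\<in>C. ts ! j) (classes (csim be) n),
     map (\<lambda>C. case be ! (Min C) of None \<Rightarrow> None
          | Some j \<Rightarrow> Some (THE k. k < length (classes (csim be) n) \<and> j \<in> classes (csim be) n ! k)) (classes (dsim be) m))"
    unfolding coal_data_def Let_def ss_def ts_def be_def m_def n_def by simp
  have b: "map (\<lambda>C. case be ! (Min C) of None \<Rightarrow> None
          | Some j \<Rightarrow> Some (THE k. k < length CCL \<and> j \<in> CCL ! k)) (map (\<lambda>x. {fst x..<snd x}) BD) = bbL"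
    unfolding bbL_def map_map
  proof (rule map_cong[OF refl])
    fix x assume x: "x \<in> set BD"
    have "fst x < snd x" using chain_ge[OF chBD x] by auto
    then have "Min {fst x..<snd x} = fst x" by (simp add: Min_eq_iff)
    then show "((\<lambda>C. case be ! (Min C) of None \<Rightarrow> None
          | Some j \<Rightarrow> Some (THE k. k < length CCL \<and> j \<in> CCL ! k)) \<circ> (\<lambda>x. {fst x..<snd x})) x =
         (case be ! (fst x) of None \<Rightarrow> None | Some j \<Rightarrow> Some (THE K. K < length CCL \<and> j \<in> CCL ! K))" by simp
  qed
  show ?thesis unfolding a DC_eq CC_eq b unfolding sbL_def tbL_def CCL_def by (simp add: comp_def)
qed

lemma start_BC: assumes x: "x \<in> set BD" and j: "be ! (fst x) = Some j"
  shows "\<exists>K < length BC. fst (BC ! K) = j"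
proof -
  have b: "fst x < snd x" "snd x \<le> m" using chain_ge[OF chBD x] by auto
  have jn: "j < n" using be_some[of "fst x" j] b j by simp
  have "j = 0 \<or> \<not> gc (j - 1)"
  proof (rule ccontr)
    assume "\<not> (j = 0 \<or> \<not> gc (j - 1))"
    then have j0: "j \<noteq> 0" and "gc (j - 1)" by auto
    then obtain p where p: "Suc p < m" "be ! p = Some (j - 1)" "be ! Suc p = Some (Suc (j - 1))"
      unfolding gc_def by auto
    have "be ! Suc p = Some j" using p(3) j0 by simp
    then have "Suc p = fst x" using be_inj[of "Suc p" "fst x" j] p b j by simp
    moreover have "gd p" using p unfolding gd_def by blast
    moreover have "fst x = 0 \<or> \<not> gd (fst x - 1)" using bl_start[of x gd 0 m] x unfolding BD_def by simp
    ultimately show False by (metis diff_Suc_1 nat.simps(3))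
  qed
  then show ?thesis using bl_start_mem[OF jn] unfolding BC_def by blast
qed

lemma the_K: assumes K: "K < length BC" "fst (BC ! K) = j"
  shows "(THE K. K < length CCL \<and> j \<in> CCL ! K) = K"
proof (rule the_equality)
  have "fst (BC ! K) < snd (BC ! K)" using chain_ge[OF chBC, of "BC ! K"] K by simp
  then show "K < length CCL \<and> j \<in> CCL ! K" using K unfolding CCL_def by simp
next
  fix K' assume K': "K' < length CCL \<and> j \<in> CCL ! K'"
  then have K'': "K' < length BC" "fst (BC ! K') \<le> j" "j < snd (BC ! K')" unfolding CCL_def by auto
  have lt: "fst (BC ! K) < snd (BC ! K)" using chain_ge[OF chBC, of "BC ! K"] K by simp
  show "K' = K"
  proof (rule ccontr)
    assume "K' \<noteq> K"
    then have "K' < K \<or> K < K'" by auto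
    then show False
    proof
      assume "K' < K"
      then have "snd (BC ! K') \<le> fst (BC ! K)" using chain_disj[OF chBC] K by blast
      then show False using K K'' by simp
    next
      assume "K < K'"
      then have "snd (BC ! K) \<le> fst (BC ! K')" using chain_disj[OF chBC] K'' by blast
      then show False using K K'' lt by simp
    qed
  qed
qed

lemma enc_eq: "enc_strides tbL bbL = map snd ZS"
  unfolding enc_strides_def bbL_def ZS_def map_map
proof (rule map_cong[OF refl])
  fix x assume x: "x \<in> set BD"
  have b: "fst x < snd x" "snd x \<le> m" using chain_ge[OF chBD x] by auto
  have dsx: "ds ! fst x = str (be ! fst x)" unfolding ds_def using b len_be by simp
  show "((\<lambda>a. case a of None \<Rightarrow> 0 | Some j \<Rightarrow> prod_list (take j tbL)) \<circ>
          (\<lambda>x. case be ! fst x of None \<Rightarrow> None | Some j \<Rightarrow> Some (THE K. K < length CCL \<and> j \<in> CCL ! K))) x =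
        (snd \<circ> (\<lambda>x. (\<Prod>k\<in>{fst x..<snd x}. ss ! k, ds ! fst x))) x"
  proof (cases "be ! fst x")
    case None
    then show ?thesis using dsx unfolding str_def by simp
  next
    case (Some j)
    obtain K where K: "K < length BC" "fst (BC ! K) = j" using start_BC[OF x Some] by blast
    have jn: "j < n" using be_some[of "fst x" j] b Some by simp
    have "prod_list (take K tbL) = (\<Prod>k\<in>{0..<j}. ts ! k)"
      unfolding tbL_def take_map using chain_prod[OF chBC K(1), of "\<lambda>k. ts ! k"] K(2) by simp
    also have "\<dots> = PT j" unfolding PT_def using prod_list_take[of j ts] jn n_def by simp
    finally show ?thesis using Some the_K[OF K] dsx unfolding str_def by simp
  qed
qed

end

lemma flat_map_Lf: "flat (Nd (map Lf xs)) = xs"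
  by (induction xs) auto

theorem mainTheorem3:
  assumes "is_ntmor f"
  shows "coal_layout (enc_layout f) = enc_layout (coal_mor f)"
proof -
  obtain S T al where f: "f = NTM S T al" by (cases f)
  have h: "positive_nt S" "positive_nt T" "is_tuple_mor (flat S) (flat T) al"
    using assms unfolding f is_ntmor_def by auto
  interpret q: sqm "flat S" "flat T" al
    using h by unfold_locales (auto simp: positive_nt_def)
  have lenes: "length (enc_strides (flat T) al) = length (flat S)"
    using h(3) unfolding enc_strides_def is_tuple_mor_def by simp
  define D0 where "D0 = (THE D. congruent S D \<and> flat D = enc_strides (flat T) al)"
  have fD0: "flat D0 = enc_strides (flat T) al" unfolding D0_def using flat_the[OF lenes] .
  have encf: "enc_layout f = (S, D0)" unfolding enc_layout_def f D0_def by simp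
  have cf: "coal_flat_l (zip (flat S) (flat D0)) = q.ZS" unfolding fD0 by (rule q.coal_flat_eq)
  have LHS: "coal_layout (enc_layout f) =
     (if length q.ZS > 1 then (Nd (map (Lf \<circ> fst) q.ZS), Nd (map (Lf \<circ> snd) q.ZS))
      else if length q.ZS = 1 then (Lf (fst (hd q.ZS)), Lf (snd (hd q.ZS)))
      else (Lf 1, Lf 0))"
    unfolding coal_layout_def encf Let_def using cf by simp
  have RHS: "coal_mor f = (if length q.sbL > 1 then NTM (Nd (map Lf q.sbL)) (Nd (map Lf q.tbL)) q.bbL
       else if length q.sbL = 1 then NTM (Lf (hd q.sbL)) (Nd (map Lf q.tbL)) q.bbL
       else NTM (Lf 1) (Nd (map Lf q.tbL)) [None])"
    unfolding coal_mor_def f using q.coal_data_eq by simp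
  have fstZ: "map fst q.ZS = q.sbL" unfolding q.ZS_def q.sbL_def by simp
  have sndZ: "map snd q.ZS = enc_strides q.tbL q.bbL" using q.enc_eq by simp
  have lsb: "length q.sbL = length q.ZS" using fstZ by (metis length_map)
  have enc_gen: "enc_layout (NTM X (Nd (map Lf q.tbL)) q.bbL) =
      (X, THE D. congruent X D \<and> flat D = map snd q.ZS)" for X
    unfolding enc_layout_def ntmor.sel flat_map_Lf sndZ by simp
  show ?thesis
  proof (cases "length q.ZS > 1")
    case True
    have c: "congruent (Nd (map Lf q.sbL)) (Nd (map (Lf \<circ> snd) q.ZS))"
      unfolding fstZ[symmetric] by (simp add: list_all2_conv_all_nth)
    have fl: "flat (Nd (map (Lf \<circ> snd) q.ZS)) = map snd q.ZS"
      using flat_map_Lf[of "map snd q.ZS"] by (simp add: comp_def)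
    have ml: "map (Lf \<circ> fst) q.ZS = map Lf q.sbL" using fstZ by (metis map_map)
    show ?thesis unfolding LHS RHS using True lsb enc_gen the_congruent[OF c fl] ml
      by (simp add: comp_def)
  next
    case False
    show ?thesis
    proof (cases "length q.ZS = 1")
      case True
      then obtain z where z: "q.ZS = [z]" by (cases q.ZS) auto
      have c: "congruent (Lf (hd q.sbL)) (Lf (snd z))" by simp
      have fl: "flat (Lf (snd z)) = map snd q.ZS" using z by simp
      have hs: "hd q.sbL = fst z" using fstZ z by (metis list.sel(1) list.simps(9))
      show ?thesis unfolding LHS RHS using True lsb enc_gen the_congruent[OF c fl] z hs by simp
    next
      case F2: False
      then have z: "q.ZS = []" using False by (cases q.ZS) auto
      have t: "(THE D. congruent (Lf (1::nat)) D \<and> flat D = [0::nat]) = Lf 0"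
        by (rule the_congruent) simp_all
      have e0: "enc_strides xs [None] = [0]" for xs by (simp add: enc_strides_def)
      have "enc_layout (NTM (Lf 1) (Nd (map Lf q.tbL)) [None]) = (Lf 1, Lf 0)"
        unfolding enc_layout_def ntmor.sel e0 t by simp
      then show ?thesis unfolding LHS RHS using z lsb by simp
    qed
  qed
qed

end
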